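(* Let $Q$ be a connected quiver and $W$ a complex vector space of dimension $n$. The moduli space of invertible quiver representations $\mathcal{M}^{inv}_W(Q)=\mathcal{R}^{inv}_W(Q)/\!\!/G_W(Q)$ is isomorphic, as an affine algebraic variety, to the character variety $\mathrm{Hom}(F_r,\mathsf{GL}(n,\mathbb{C}))/\!\!/\mathsf{GL}(n,\mathbb{C})$, where $r=b_1(Q)$ and $F_r$ is the free group of rank $r$.
   Context: A quiver $Q=(Q_V,Q_A)$ is a finite directed graph; each arrow $a$ has head $h_a$ and tail $t_a$; $b_1(Q)$ is the rank of $H_1(Q,\mathbb{Z})$ of its underlying 1-dimensional CW complex. $\mathcal{R}_W(Q)=\bigoplus_{a\in Q_A}\mathrm{End}(W)$, and $G_W(Q)=\mathsf{GL}(W)^{Q_V}$ acts by $(g\cdot x)(a)=g_{h_a}x(a)g_{t_a}^{-1}$. $\mathcal{R}^{inv}_W(Q)\subset\mathcal{R}_W(Q)$ is the set of $x$ with $x(a)\in\mathsf{GL}(W)$ for all $a$; the GIT quotient is taken for the $G_W(Q)$-action. The character variety is the GIT quotient by simultaneous conjugation. *)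

theory Defs
  imports "HOL-Analysis.Analysis"
begin

text \<open>Tuples of n x n complex matrices indexed by 'i (only indices in a given set I matter).\<close>
type_synonym ('i, 'n) mtuple = "'i \<Rightarrow> complex^'n^'n"

text \<open>Generators of regular functions on an open subset of tuples of invertible matrices:
  polynomials in the matrix entries and in the inverses of the determinants.\<close>
inductive_set reg_gen :: "'i set \<Rightarrow> (('i \<Rightarrow> complex^'n::finite^'n) \<Rightarrow> complex) set"
  for I :: "'i set" where
  const: "(\<lambda>x. c) \<in> reg_gen I"
| coord: "i \<in> I \<Longrightarrow> (\<lambda>x. x i $ j $ k) \<in> reg_gen I"
| invdet: "i \<in> I \<Longrightarrow> (\<lambda>x. inverse (det (x i))) \<in> reg_gen I"
| add: "f \<in> reg_gen I \<Longrightarrow> g \<in> reg_gen I \<Longrightarrow> (\<lambda>x. f x + g x) \<in> reg_gen I"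
| mult: "f \<in> reg_gen I \<Longrightarrow> g \<in> reg_gen I \<Longrightarrow> (\<lambda>x. f x * g x) \<in> reg_gen I"

definition coord_ring :: "'i set \<Rightarrow> ('i \<Rightarrow> complex^'n::finite^'n) set
    \<Rightarrow> (('i \<Rightarrow> complex^'n^'n) \<Rightarrow> complex) set" where
  "coord_ring I X = (\<lambda>p. \<lambda>x. if x \<in> X then p x else 0) ` reg_gen I"

text \<open>Ring of invariants; its maximal spectrum is the GIT quotient X//G.\<close>
definition inv_ring :: "'i set \<Rightarrow> ('i \<Rightarrow> complex^'n::finite^'n) set \<Rightarrow> 'g set
    \<Rightarrow> ('g \<Rightarrow> ('i \<Rightarrow> complex^'n^'n) \<Rightarrow> ('i \<Rightarrow> complex^'n^'n))
    \<Rightarrow> (('i \<Rightarrow> complex^'n^'n) \<Rightarrow> complex) set" where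
  "inv_ring I X G act = {f \<in> coord_ring I X. \<forall>g\<in>G. \<forall>x\<in>X. f (act g x) = f x}"

text \<open>Isomorphism of complex algebras of functions on X resp. Y
  (= isomorphism of the corresponding affine varieties).\<close>
definition alg_iso :: "('x \<Rightarrow> complex) set \<Rightarrow> 'x set \<Rightarrow> ('y \<Rightarrow> complex) set \<Rightarrow> 'y set \<Rightarrow> bool" where
  "alg_iso R X S Y \<longleftrightarrow> (\<exists>\<Phi>. bij_betw \<Phi> R S
      \<and> (\<forall>f\<in>R. \<forall>g\<in>R. \<Phi> (\<lambda>x. f x + g x) = (\<lambda>y. \<Phi> f y + \<Phi> g y)
                     \<and> \<Phi> (\<lambda>x. f x * g x) = (\<lambda>y. \<Phi> f y * \<Phi> g y))
      \<and> (\<forall>c. \<Phi> (\<lambda>x. if x \<in> X then c else 0) = (\<lambda>y. if y \<in> Y then c else 0)))"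

definition quiver_connected :: "'v set \<Rightarrow> 'a set \<Rightarrow> ('a \<Rightarrow> 'v) \<Rightarrow> ('a \<Rightarrow> 'v) \<Rightarrow> bool" where
  "quiver_connected V A hh tt \<longleftrightarrow> V \<noteq> {} \<and>
     (let E = {(hh a, tt a) | a. a \<in> A} in V \<times> V \<subseteq> (E \<union> E\<inverse>)\<^sup>*)"

definition betti1 :: "'v set \<Rightarrow> 'a set \<Rightarrow> nat" where
  "betti1 V A = card A + 1 - card V"

definition R_inv :: "'a set \<Rightarrow> ('a \<Rightarrow> complex^'n::finite^'n) set" where
  "R_inv A = {x. (\<forall>a\<in>A. invertible (x a)) \<and> (\<forall>a. a \<notin> A \<longrightarrow> x a = 0)}"

definition G_W :: "'v set \<Rightarrow> ('v \<Rightarrow> complex^'n::finite^'n) set" where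
  "G_W V = {g. \<forall>v\<in>V. invertible (g v)}"

definition quiver_act :: "'a set \<Rightarrow> ('a \<Rightarrow> 'v) \<Rightarrow> ('a \<Rightarrow> 'v) \<Rightarrow> ('v \<Rightarrow> complex^'n::finite^'n)
    \<Rightarrow> ('a \<Rightarrow> complex^'n^'n) \<Rightarrow> ('a \<Rightarrow> complex^'n^'n)" where
  "quiver_act A hh tt g x = (\<lambda>a. if a \<in> A then g (hh a) ** x a ** matrix_inv (g (tt a)) else 0)"

text \<open>Hom(F_r, GL(n)) = GL(n)^r, as r-tuples (indices < r) of invertible matrices.\<close>
definition hom_free :: "nat \<Rightarrow> (nat \<Rightarrow> complex^'n::finite^'n) set" where
  "hom_free r = {y. (\<forall>i<r. invertible (y i)) \<and> (\<forall>i. r \<le> i \<longrightarrow> y i = 0)}"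

definition GLn :: "(complex^'n::finite^'n) set" where
  "GLn = {g. invertible g}"

definition conj_act :: "nat \<Rightarrow> complex^'n::finite^'n \<Rightarrow> (nat \<Rightarrow> complex^'n^'n) \<Rightarrow> (nat \<Rightarrow> complex^'n^'n)" where
  "conj_act r g y = (\<lambda>i. if i < r then g ** y i ** matrix_inv g else 0)"

end

theory Submission
  imports Defs
begin


lemma minv_prop:
  fixes A :: "'a::field^'n^'n"
  assumes "invertible A"
  shows "A ** matrix_inv A = mat 1" "matrix_inv A ** A = mat 1"
proof -
  have "\<exists>A'. A ** A' = mat 1 \<and> A' ** A = mat 1" using assms unfolding invertible_def by blast
  hence "A ** matrix_inv A = mat 1 \<and> matrix_inv A ** A = mat 1"
    unfolding matrix_inv_def by (rule someI_ex)
  thus "A ** matrix_inv A = mat 1" "matrix_inv A ** A = mat 1" by auto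
qed

lemma minv_unique:
  fixes A :: "'a::field^'n^'n"
  assumes "A ** B = mat 1"
  shows "matrix_inv A = B"
proof -
  have inv: "invertible A" using assms invertible_right_inverse by blast
  have "matrix_inv A = matrix_inv A ** (A ** B)" by (simp add: assms)
  also have "\<dots> = (matrix_inv A ** A) ** B" by (simp add: matrix_mul_assoc)
  also have "\<dots> = B" using minv_prop[OF inv] by simp
  finally show ?thesis .
qed

lemma minv_mat1: "matrix_inv (mat 1 :: 'a::field^'n^'n) = mat 1"
  by (rule minv_unique) simp

lemma invertible_minv:
  fixes A :: "'a::field^'n^'n"
  assumes "invertible A" shows "invertible (matrix_inv A)"
  using minv_prop[OF assms] invertible_def by blast

lemma minv_minv:
  fixes A :: "'a::field^'n^'n"
  assumes "invertible A" shows "matrix_inv (matrix_inv A) = A"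
  by (rule minv_unique) (use minv_prop[OF assms] in simp)

lemma minv_mult:
  fixes A B :: "'a::field^'n^'n"
  assumes "invertible A" "invertible B"
  shows "matrix_inv (A ** B) = matrix_inv B ** matrix_inv A"
proof (rule minv_unique)
  have "A ** B ** (matrix_inv B ** matrix_inv A) = A ** (B ** matrix_inv B) ** matrix_inv A"
    by (simp add: matrix_mul_assoc)
  also have "\<dots> = mat 1" using minv_prop[OF assms(1)] minv_prop[OF assms(2)] by simp
  finally show "A ** B ** (matrix_inv B ** matrix_inv A) = mat 1" .
qed

lemma minv_entry:
  fixes A :: "'a::field^'n^'n"
  assumes "invertible A"
  shows "matrix_inv A $ k $ j = det (\<chi> i l. if l = k then axis j 1 $ i else A$i$l) * inverse (det A)"
proof -
  let ?x = "(\<chi> k. matrix_inv A $ k $ j)"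
  let ?b = "axis j 1 :: 'a^'n"
  have d0: "det A \<noteq> 0" using assms invertible_det_nz by blast
  have "A *v ?x = ?b"
  proof -
    have "A *v ?x = (\<chi> i. (A ** matrix_inv A) $ i $ j)"
      by (simp add: matrix_vector_mult_def matrix_matrix_mult_def)
    also have "\<dots> = ?b" using minv_prop[OF assms] by (simp add: mat_def axis_def vec_eq_iff)
    finally show ?thesis .
  qed
  hence "?x = (\<chi> k. det(\<chi> i l. if l=k then ?b$i else A$i$l) / det A)"
    using cramer[OF d0] by blast
  hence "?x $ k = det(\<chi> i l. if l=k then ?b$i else A$i$l) / det A" by simp
  thus ?thesis by (simp add: divide_inverse)
qed



definition regon :: "'i set \<Rightarrow> ('i \<Rightarrow> complex^'n::finite^'n) set \<Rightarrow> (('i \<Rightarrow> complex^'n^'n) \<Rightarrow> complex) \<Rightarrow> bool" where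
  "regon I X \<phi> \<longleftrightarrow> (\<exists>f\<in>reg_gen I. \<forall>x\<in>X. \<phi> x = f x)"

lemma regon_const: "regon I X (\<lambda>x. c)"
  unfolding regon_def by (intro bexI[of _ "\<lambda>x. c"] reg_gen.const) auto

lemma regon_add: "regon I X f \<Longrightarrow> regon I X g \<Longrightarrow> regon I X (\<lambda>x. f x + g x)"
  unfolding regon_def
proof (elim bexE)
  fix f' g' assume "f' \<in> reg_gen I" "\<forall>x\<in>X. f x = f' x" "g' \<in> reg_gen I" "\<forall>x\<in>X. g x = g' x"
  then show "\<exists>h\<in>reg_gen I. \<forall>x\<in>X. f x + g x = h x"
    by (intro bexI[of _ "\<lambda>x. f' x + g' x"] reg_gen.add) auto
qed

lemma regon_mult: "regon I X f \<Longrightarrow> regon I X g \<Longrightarrow> regon I X (\<lambda>x. f x * g x)"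
  unfolding regon_def
proof (elim bexE)
  fix f' g' assume "f' \<in> reg_gen I" "\<forall>x\<in>X. f x = f' x" "g' \<in> reg_gen I" "\<forall>x\<in>X. g x = g' x"
  then show "\<exists>h\<in>reg_gen I. \<forall>x\<in>X. f x * g x = h x"
    by (intro bexI[of _ "\<lambda>x. f' x * g' x"] reg_gen.mult) auto
qed

lemma regon_cong: "regon I X f \<Longrightarrow> (\<And>x. x \<in> X \<Longrightarrow> f x = g x) \<Longrightarrow> regon I X g"
  unfolding regon_def by auto

lemma regon_sum:
  assumes "finite S" "\<And>s. s \<in> S \<Longrightarrow> regon I X (f s)"
  shows "regon I X (\<lambda>x. \<Sum>s\<in>S. f s x)"
  using assms
proof (induction S rule: finite_induct)
  case empty then show ?case by (simp add: regon_const)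
next
  case (insert a F)
  then show ?case by (simp add: regon_add)
qed

lemma regon_prod:
  assumes "finite S" "\<And>s. s \<in> S \<Longrightarrow> regon I X (f s)"
  shows "regon I X (\<lambda>x. \<Prod>s\<in>S. f s x)"
  using assms
proof (induction S rule: finite_induct)
  case empty then show ?case by (simp add: regon_const)
next
  case (insert a F)
  then show ?case by (simp add: regon_mult)
qed

lemma regon_det:
  fixes F :: "('i \<Rightarrow> complex^'n::finite^'n) \<Rightarrow> complex^'m::finite^'m"
  assumes "\<And>j k. regon I X (\<lambda>x. F x $ j $ k)"
  shows "regon I X (\<lambda>x. det (F x))"
  unfolding det_def
proof (rule regon_sum)
  fix p show "regon I X (\<lambda>x. of_int (sign p) * (\<Prod>i\<in>UNIV. F x $ i $ p i))"
    by (rule regon_mult[OF regon_const regon_prod[OF finite]]) (rule assms)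
qed simp

definition mreg :: "'i set \<Rightarrow> ('i \<Rightarrow> complex^'n::finite^'n) set \<Rightarrow> (('i \<Rightarrow> complex^'n^'n) \<Rightarrow> complex^'n^'n) \<Rightarrow> bool" where
  "mreg I X F \<longleftrightarrow> (\<forall>j k. regon I X (\<lambda>x. F x $ j $ k)) \<and> regon I X (\<lambda>x. inverse (det (F x)))"

lemma regon_gen: "f \<in> reg_gen I \<Longrightarrow> regon I X f"
  unfolding regon_def by blast

lemma mreg_coord: "i \<in> I \<Longrightarrow> mreg I X (\<lambda>x. x i)"
  unfolding mreg_def by (simp add: regon_gen reg_gen.coord reg_gen.invdet)

lemma mreg_const: "mreg I X (\<lambda>x. C)"
  unfolding mreg_def by (simp add: regon_const)

lemma mreg_cong:
  assumes F: "mreg I X F" and eq: "\<And>x. x \<in> X \<Longrightarrow> F x = G x"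
  shows "mreg I X G"
proof -
  have e: "regon I X (\<lambda>x. F x $ j $ k)" for j k using F unfolding mreg_def by blast
  have d: "regon I X (\<lambda>x. inverse (det (F x)))" using F unfolding mreg_def by blast
  have "regon I X (\<lambda>x. G x $ j $ k)" for j k
    by (rule regon_cong[OF e]) (simp add: eq)
  moreover have "regon I X (\<lambda>x. inverse (det (G x)))"
    by (rule regon_cong[OF d]) (simp add: eq)
  ultimately show ?thesis unfolding mreg_def by blast
qed

lemma mreg_mult:
  assumes "mreg I X F" "mreg I X G"
  shows "mreg I X (\<lambda>x. F x ** G x)"
proof -
  have "regon I X (\<lambda>x. (F x ** G x) $ j $ k)" for j k
    unfolding matrix_matrix_mult_def
    using assms unfolding mreg_def by (simp add: regon_sum regon_mult)
  moreover have "regon I X (\<lambda>x. inverse (det (F x ** G x)))"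
    using assms unfolding mreg_def by (simp add: det_mul regon_mult)
  ultimately show ?thesis unfolding mreg_def by blast
qed

lemma mreg_inv:
  assumes "mreg I X F" "\<And>x. x \<in> X \<Longrightarrow> invertible (F x)"
  shows "mreg I X (\<lambda>x. matrix_inv (F x))"
proof -
  have e: "\<And>j k. regon I X (\<lambda>x. F x $ j $ k)" and d: "regon I X (\<lambda>x. inverse (det (F x)))"
    using assms(1) unfolding mreg_def by auto
  have "regon I X (\<lambda>x. matrix_inv (F x) $ k $ j)" for k j
  proof (rule regon_cong)
    show "regon I X (\<lambda>x. det (\<chi> i l. if l = k then axis j 1 $ i else F x $i$l) * inverse (det (F x)))"
    proof (intro regon_mult d regon_det)
      fix ja ka show "regon I X (\<lambda>x. (\<chi> i l. if l = k then axis j 1 $ i else F x $i$l) $ ja $ ka)"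
        by (cases "ka = k") (simp_all add: e regon_const)
    qed
    show "\<And>x. x \<in> X \<Longrightarrow> det (\<chi> i l. if l = k then axis j 1 $ i else F x $i$l) * inverse (det (F x)) = matrix_inv (F x) $ k $ j"
      using minv_entry[OF assms(2)] by simp
  qed
  moreover have "regon I X (\<lambda>x. inverse (det (matrix_inv (F x))))"
  proof (rule regon_cong)
    show "regon I X (\<lambda>x. det (F x))" by (rule regon_det) (rule e)
    fix x assume "x \<in> X"
    hence iv: "invertible (F x)" using assms(2) by blast
    have "det (F x ** matrix_inv (F x)) = 1"
      using minv_prop[OF iv] by simp
    hence "det (F x) * det (matrix_inv (F x)) = 1" by (simp add: det_mul)
    thus "det (F x) = inverse (det (matrix_inv (F x)))"
      using inverse_unique[of "det (matrix_inv (F x))" "det (F x)"] by (simp add: mult.commute)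
  qed
  ultimately show ?thesis unfolding mreg_def by blast
qed

lemma regon_subst:
  assumes "f \<in> reg_gen I" "\<And>i. i \<in> I \<Longrightarrow> mreg J Y (\<lambda>y. F y i)"
  shows "regon J Y (\<lambda>y. f (F y))"
  using assms(1)
proof (induction rule: reg_gen.induct)
  case (const c) then show ?case by (rule regon_const)
next
  case (coord i j k)
  have "mreg J Y (\<lambda>y. F y i)" using assms(2) coord by blast
  then show ?case unfolding mreg_def by simp
next
  case (invdet i)
  have "mreg J Y (\<lambda>y. F y i)" using assms(2) invdet by blast
  then show ?case unfolding mreg_def by simp
next
  case (add f g) then show ?case by (intro regon_add add.IH)
next
  case (mult f g) then show ?case by (intro regon_mult mult.IH)
qed



lemma alg_iso_trans:
  assumes "alg_iso R X S Y" "alg_iso S Y T Z"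
  shows "alg_iso R X T Z"
proof -
  obtain \<Phi> where P: "bij_betw \<Phi> R S"
      "\<forall>f\<in>R. \<forall>g\<in>R. \<Phi> (\<lambda>x. f x + g x) = (\<lambda>y. \<Phi> f y + \<Phi> g y) \<and> \<Phi> (\<lambda>x. f x * g x) = (\<lambda>y. \<Phi> f y * \<Phi> g y)"
      "\<forall>c. \<Phi> (\<lambda>x. if x \<in> X then c else 0) = (\<lambda>y. if y \<in> Y then c else 0)"
    using assms(1) unfolding alg_iso_def by blast
  obtain \<Psi> where Q: "bij_betw \<Psi> S T"
      "\<forall>f\<in>S. \<forall>g\<in>S. \<Psi> (\<lambda>x. f x + g x) = (\<lambda>y. \<Psi> f y + \<Psi> g y) \<and> \<Psi> (\<lambda>x. f x * g x) = (\<lambda>y. \<Psi> f y * \<Psi> g y)"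
      "\<forall>c. \<Psi> (\<lambda>x. if x \<in> Y then c else 0) = (\<lambda>y. if y \<in> Z then c else 0)"
    using assms(2) unfolding alg_iso_def by blast
  have im: "\<And>f. f \<in> R \<Longrightarrow> \<Phi> f \<in> S" using P(1) bij_betwE by blast
  have "bij_betw (\<Psi> \<circ> \<Phi>) R T" using P(1) Q(1) bij_betw_trans by blast
  moreover have "\<forall>f\<in>R. \<forall>g\<in>R. (\<Psi> \<circ> \<Phi>) (\<lambda>x. f x + g x) = (\<lambda>y. (\<Psi> \<circ> \<Phi>) f y + (\<Psi> \<circ> \<Phi>) g y)
         \<and> (\<Psi> \<circ> \<Phi>) (\<lambda>x. f x * g x) = (\<lambda>y. (\<Psi> \<circ> \<Phi>) f y * (\<Psi> \<circ> \<Phi>) g y)"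
    using P(2) Q(2) im by simp
  moreover have "\<forall>c. (\<Psi> \<circ> \<Phi>) (\<lambda>x. if x \<in> X then c else 0) = (\<lambda>y. if y \<in> Z then c else 0)"
    using P(3) Q(3) by simp
  ultimately show ?thesis unfolding alg_iso_def by blast
qed

lemma transfer:
  fixes X :: "('i \<Rightarrow> complex^'n::finite^'n) set" and Y :: "('j \<Rightarrow> complex^'n^'n) set"
  assumes \<sigma>Y: "\<And>y. y \<in> Y \<Longrightarrow> \<sigma> y \<in> X"
    and \<pi>X: "\<And>x. x \<in> X \<Longrightarrow> \<pi> x \<in> Y"
    and actX: "\<And>g x. g \<in> G \<Longrightarrow> x \<in> X \<Longrightarrow> aX g x \<in> X"
    and actY: "\<And>h y. h \<in> H \<Longrightarrow> y \<in> Y \<Longrightarrow> aY h y \<in> Y"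
    and reg\<sigma>: "\<And>f. f \<in> reg_gen I \<Longrightarrow> regon J Y (\<lambda>y. f (\<sigma> y))"
    and reg\<pi>: "\<And>f. f \<in> reg_gen J \<Longrightarrow> regon I X (\<lambda>x. f (\<pi> x))"
    and c1: "\<And>h y. h \<in> H \<Longrightarrow> y \<in> Y \<Longrightarrow> \<exists>g\<in>G. \<sigma> (aY h y) = aX g (\<sigma> y)"
    and c2: "\<And>g x. g \<in> G \<Longrightarrow> x \<in> X \<Longrightarrow> \<exists>h\<in>H. \<pi> (aX g x) = aY h (\<pi> x)"
    and d: "\<And>y. y \<in> Y \<Longrightarrow> \<pi> (\<sigma> y) = y"
    and e: "\<And>x. x \<in> X \<Longrightarrow> \<exists>g\<in>G. \<sigma> (\<pi> x) = aX g x"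
  shows "alg_iso (inv_ring I X G aX) X (inv_ring J Y H aY) Y"
proof -
  define \<Phi> where "\<Phi> F = (\<lambda>y. if y \<in> Y then F (\<sigma> y) else (0::complex))" for F :: "('i \<Rightarrow> complex^'n^'n) \<Rightarrow> complex"
  define \<Psi> where "\<Psi> F = (\<lambda>x. if x \<in> X then F (\<pi> x) else (0::complex))" for F :: "('j \<Rightarrow> complex^'n^'n) \<Rightarrow> complex"
  let ?R = "inv_ring I X G aX" and ?S = "inv_ring J Y H aY"
  have Rz: "F x = 0" if "F \<in> ?R" "x \<notin> X" for F x
    using that unfolding inv_ring_def coord_ring_def by auto
  have Sz: "F y = 0" if "F \<in> ?S" "y \<notin> Y" for F y
    using that unfolding inv_ring_def coord_ring_def by auto
  have RI: "F (aX g x) = F x" if "F \<in> ?R" "g \<in> G" "x \<in> X" for F g x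
    using that unfolding inv_ring_def by auto
  have SI: "F (aY g x) = F x" if "F \<in> ?S" "g \<in> H" "x \<in> Y" for F g x
    using that unfolding inv_ring_def by auto
  have \<Phi>S: "\<Phi> F \<in> ?S" if F: "F \<in> ?R" for F
  proof -
    obtain p where p: "p \<in> reg_gen I" "F = (\<lambda>x. if x \<in> X then p x else 0)"
      using F unfolding inv_ring_def coord_ring_def by auto
    obtain q where q: "q \<in> reg_gen J" "\<forall>y\<in>Y. p (\<sigma> y) = q y"
      using reg\<sigma>[OF p(1)] unfolding regon_def by blast
    have "\<Phi> F = (\<lambda>y. if y \<in> Y then q y else 0)"
      unfolding \<Phi>_def p(2) using q(2) \<sigma>Y by (auto simp: fun_eq_iff)
    hence "\<Phi> F \<in> coord_ring J Y" unfolding coord_ring_def using q(1) by blast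
    moreover have "\<forall>h\<in>H. \<forall>y\<in>Y. \<Phi> F (aY h y) = \<Phi> F y"
    proof (intro ballI)
      fix h y assume h: "h \<in> H" and y: "y \<in> Y"
      obtain g where g: "g \<in> G" "\<sigma> (aY h y) = aX g (\<sigma> y)" using c1[OF h y] by blast
      show "\<Phi> F (aY h y) = \<Phi> F y"
        unfolding \<Phi>_def using actY[OF h y] y g RI[OF F g(1) \<sigma>Y[OF y]] by simp
    qed
    ultimately show ?thesis unfolding inv_ring_def by blast
  qed
  have \<Psi>R: "\<Psi> F \<in> ?R" if F: "F \<in> ?S" for F
  proof -
    obtain p where p: "p \<in> reg_gen J" "F = (\<lambda>x. if x \<in> Y then p x else 0)"
      using F unfolding inv_ring_def coord_ring_def by auto
    obtain q where q: "q \<in> reg_gen I" "\<forall>y\<in>X. p (\<pi> y) = q y"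
      using reg\<pi>[OF p(1)] unfolding regon_def by blast
    have "\<Psi> F = (\<lambda>y. if y \<in> X then q y else 0)"
      unfolding \<Psi>_def p(2) using q(2) \<pi>X by (auto simp: fun_eq_iff)
    hence "\<Psi> F \<in> coord_ring I X" unfolding coord_ring_def using q(1) by blast
    moreover have "\<forall>h\<in>G. \<forall>y\<in>X. \<Psi> F (aX h y) = \<Psi> F y"
    proof (intro ballI)
      fix h y assume h: "h \<in> G" and y: "y \<in> X"
      obtain g where g: "g \<in> H" "\<pi> (aX h y) = aY g (\<pi> y)" using c2[OF h y] by blast
      show "\<Psi> F (aX h y) = \<Psi> F y"
        unfolding \<Psi>_def using actX[OF h y] y g SI[OF F g(1) \<pi>X[OF y]] by simp
    qed
    ultimately show ?thesis unfolding inv_ring_def by blast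
  qed
  have \<Psi>\<Phi>: "\<Psi> (\<Phi> F) = F" if F: "F \<in> ?R" for F
  proof
    fix x show "\<Psi> (\<Phi> F) x = F x"
    proof (cases "x \<in> X")
      case True
      obtain g where g: "g \<in> G" "\<sigma> (\<pi> x) = aX g x" using e[OF True] by blast
      show ?thesis unfolding \<Psi>_def \<Phi>_def using True \<pi>X[OF True] g RI[OF F g(1) True] by simp
    next
      case False then show ?thesis unfolding \<Psi>_def using Rz[OF F] by simp
    qed
  qed
  have \<Phi>\<Psi>: "\<Phi> (\<Psi> F) = F" if F: "F \<in> ?S" for F
  proof
    fix y show "\<Phi> (\<Psi> F) y = F y"
    proof (cases "y \<in> Y")
      case True
      show ?thesis unfolding \<Psi>_def \<Phi>_def using True \<sigma>Y[OF True] d[OF True] by simp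
    next
      case False then show ?thesis unfolding \<Phi>_def using Sz[OF F] by simp
    qed
  qed
  have "bij_betw \<Phi> ?R ?S"
    by (rule bij_betwI[where g = \<Psi>]) (use \<Phi>S \<Psi>R \<Psi>\<Phi> \<Phi>\<Psi> in auto)
  moreover have "\<forall>f\<in>?R. \<forall>g\<in>?R. \<Phi> (\<lambda>x. f x + g x) = (\<lambda>y. \<Phi> f y + \<Phi> g y)
                     \<and> \<Phi> (\<lambda>x. f x * g x) = (\<lambda>y. \<Phi> f y * \<Phi> g y)"
    unfolding \<Phi>_def by (auto simp: fun_eq_iff)
  moreover have "\<forall>c. \<Phi> (\<lambda>x. if x \<in> X then c else 0) = (\<lambda>y. if y \<in> Y then c else 0)"
    unfolding \<Phi>_def using \<sigma>Y by (auto simp: fun_eq_iff)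
  ultimately show ?thesis unfolding alg_iso_def by blast
qed



lemma invertible_mat1: "invertible (mat 1 :: 'a::field^'n^'n)"
  unfolding invertible_def by (intro exI[of _ "mat 1"]) simp

lemma qact_R_inv:
  fixes x :: "'a \<Rightarrow> complex^'n::finite^'n"
  assumes "g \<in> G_W V" "\<forall>a\<in>A. hh a \<in> V \<and> tt a \<in> V" "\<forall>a\<in>A. invertible (x a)"
  shows "quiver_act A hh tt g x \<in> R_inv A"
  using assms unfolding R_inv_def G_W_def quiver_act_def
  by (auto intro!: invertible_mult invertible_minv)

lemma key_id:
  fixes X G1 G2 K :: "complex^'n::finite^'n"
  assumes "invertible X" "invertible G1" "invertible G2"
  shows "matrix_inv (G1 ** X ** matrix_inv G2) ** G1 = G2 ** matrix_inv X"
proof -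
  have "matrix_inv (G1 ** X ** matrix_inv G2) = matrix_inv (matrix_inv G2) ** matrix_inv (G1 ** X)"
    using assms by (simp add: minv_mult invertible_mult invertible_minv)
  also have "\<dots> = G2 ** (matrix_inv X ** matrix_inv G1)"
    using assms by (simp add: minv_mult minv_minv)
  finally have "matrix_inv (G1 ** X ** matrix_inv G2) ** G1 = G2 ** (matrix_inv X ** matrix_inv G1) ** G1"
    by simp
  also have "\<dots> = G2 ** matrix_inv X ** (matrix_inv G1 ** G1)" by (simp add: matrix_mul_assoc)
  also have "\<dots> = G2 ** matrix_inv X" using minv_prop[OF assms(2)] by simp
  finally show ?thesis .
qed

lemma key_id2:
  fixes K1 K G1 G2 :: "complex^'n::finite^'n"
  assumes "K1 ** G1 = G2 ** K" "invertible K1" "invertible K" "invertible G1" "invertible G2"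
  shows "matrix_inv G1 ** matrix_inv K1 = matrix_inv K ** matrix_inv G2"
proof -
  have "matrix_inv G1 ** matrix_inv K1 = matrix_inv (K1 ** G1)" using assms(2,4) by (simp add: minv_mult)
  also have "\<dots> = matrix_inv (G2 ** K)" using assms(1) by simp
  also have "\<dots> = matrix_inv K ** matrix_inv G2" using assms(3,5) by (simp add: minv_mult)
  finally show ?thesis .
qed

lemma four_assoc:
  fixes K1 G1 X G2 K2 :: "'a::comm_ring_1^'n::finite^'n"
  shows "K1 ** (G1 ** X ** G2) ** K2 = (K1 ** G1) ** X ** (G2 ** K2)"
  by (simp add: matrix_mul_assoc)

lemma contract_step:
  fixes V :: "'v set" and A :: "'a set" and hh tt :: "'a \<Rightarrow> 'v"
  assumes eA: "e \<in> A" and uw: "tt e \<noteq> hh e"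
    and HT: "\<forall>a\<in>A. hh a \<in> V \<and> tt a \<in> V"
  defines "w \<equiv> hh e" and "u \<equiv> tt e"
  defines "\<phi> \<equiv> (\<lambda>v. if v = w then u else v)"
  shows "alg_iso
     (inv_ring A (R_inv A :: ('a \<Rightarrow> complex^'n::finite^'n) set) (G_W V) (quiver_act A hh tt))
     (R_inv A :: ('a \<Rightarrow> complex^'n::finite^'n) set)
     (inv_ring (A - {e}) (R_inv (A - {e}) :: ('a \<Rightarrow> complex^'n::finite^'n) set) (G_W (V - {w}))
        (quiver_act (A - {e}) (\<phi> \<circ> hh) (\<phi> \<circ> tt)))
     (R_inv (A - {e}) :: ('a \<Rightarrow> complex^'n::finite^'n) set)"
proof -
  let ?A' = "A - {e}" and ?V' = "V - {w}"
  let ?X = "R_inv A :: ('a \<Rightarrow> complex^'n::finite^'n) set" and ?Y = "R_inv ?A' :: ('a \<Rightarrow> complex^'n::finite^'n) set"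
  define k where "k x v = (if v = w then matrix_inv (x e) else mat 1)" for x :: "'a \<Rightarrow> complex^'n^'n" and v
  define \<sigma> where "\<sigma> y = y(e := mat 1)" for y :: "'a \<Rightarrow> complex^'n^'n"
  define \<pi> where "\<pi> x = quiver_act ?A' hh tt (k x) x" for x :: "'a \<Rightarrow> complex^'n^'n"
  have uV: "u \<in> V" "w \<in> V" using HT eA unfolding u_def w_def by auto
  have uw': "u \<noteq> w" using uw unfolding u_def w_def .
  have Xinv: "\<And>x a. x \<in> ?X \<Longrightarrow> a \<in> A \<Longrightarrow> invertible (x a)" unfolding R_inv_def by auto
  have Xz: "\<And>x a. x \<in> ?X \<Longrightarrow> a \<notin> A \<Longrightarrow> x a = 0" unfolding R_inv_def by auto
  have Yinv: "\<And>x a. x \<in> ?Y \<Longrightarrow> a \<in> ?A' \<Longrightarrow> invertible (x a)" unfolding R_inv_def by auto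
  have Yz: "\<And>x a. x \<in> ?Y \<Longrightarrow> a \<notin> ?A' \<Longrightarrow> x a = 0" unfolding R_inv_def by auto
  have kinv: "\<And>x v. x \<in> ?X \<Longrightarrow> invertible (k x v)"
    unfolding k_def using Xinv[OF _ eA] by (auto intro: invertible_minv invertible_mat1)
  have kG: "\<And>x. x \<in> ?X \<Longrightarrow> k x \<in> G_W V" unfolding G_W_def using kinv by blast
  have HT': "\<forall>a\<in>?A'. (\<phi> \<circ> hh) a \<in> ?V' \<and> (\<phi> \<circ> tt) a \<in> ?V'"
    using HT uV uw' unfolding \<phi>_def by auto
  show ?thesis
  proof (rule transfer[where \<sigma> = \<sigma> and \<pi> = \<pi>])
    show "\<sigma> y \<in> ?X" if "y \<in> ?Y" for y
      using that eA unfolding R_inv_def \<sigma>_def by (auto simp: invertible_mat1)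
    show "\<pi> x \<in> ?Y" if x: "x \<in> ?X" for x
    proof -
      have "k x \<in> G_W UNIV" unfolding G_W_def using kinv[OF x] by blast
      moreover have "\<forall>a\<in>?A'. invertible (x a)" using Xinv[OF x] by blast
      ultimately show ?thesis unfolding \<pi>_def by (intro qact_R_inv) auto
    qed
    show "quiver_act A hh tt g x \<in> ?X" if "g \<in> G_W V" "x \<in> ?X" for g x
      using that HT Xinv by (intro qact_R_inv) auto
    show "quiver_act ?A' (\<phi> \<circ> hh) (\<phi> \<circ> tt) g y \<in> ?Y" if "g \<in> G_W ?V'" "y \<in> ?Y" for g y
      using that HT' Yinv by (intro qact_R_inv) auto
    show "regon ?A' ?Y (\<lambda>y. f (\<sigma> y))" if "f \<in> reg_gen A" for f
    proof (rule regon_subst[OF that])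
      fix i assume i: "i \<in> A"
      show "mreg ?A' ?Y (\<lambda>y. \<sigma> y i)"
      proof (cases "i = e")
        case True then show ?thesis unfolding \<sigma>_def by (simp add: mreg_const)
      next
        case False then show ?thesis unfolding \<sigma>_def using i by (simp add: mreg_coord)
      qed
    qed
    show "regon A ?X (\<lambda>x. f (\<pi> x))" if "f \<in> reg_gen ?A'" for f
    proof (rule regon_subst[OF that])
      fix i assume i: "i \<in> ?A'"
      have mk: "mreg A ?X (\<lambda>x. k x v)" for v
      proof (cases "v = w")
        case True
        have "mreg A ?X (\<lambda>x. matrix_inv (x e))"
          by (rule mreg_inv[OF mreg_coord[OF eA]]) (rule Xinv[OF _ eA])
        then show ?thesis unfolding k_def using True by simp
      next
        case False then show ?thesis unfolding k_def by (simp add: mreg_const)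
      qed
      have "mreg A ?X (\<lambda>x. k x (hh i) ** x i ** matrix_inv (k x (tt i)))"
        using i by (intro mreg_mult mreg_inv mk mreg_coord kinv) auto
      then show "mreg A ?X (\<lambda>x. \<pi> x i)"
        unfolding \<pi>_def quiver_act_def using i by simp
    qed
    show "\<exists>g\<in>G_W V. \<sigma> (quiver_act ?A' (\<phi> \<circ> hh) (\<phi> \<circ> tt) h y) = quiver_act A hh tt g (\<sigma> y)"
      if h: "h \<in> G_W ?V'" and y: "y \<in> ?Y" for h y
    proof (intro bexI[of _ "h \<circ> \<phi>"])
      show "h \<circ> \<phi> \<in> G_W V" using h uV uw' unfolding G_W_def \<phi>_def by auto
      have hu: "invertible (h u)" using h uV uw' unfolding G_W_def by auto
      show "\<sigma> (quiver_act ?A' (\<phi> \<circ> hh) (\<phi> \<circ> tt) h y) = quiver_act A hh tt (h \<circ> \<phi>) (\<sigma> y)"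
      proof
        fix a show "\<sigma> (quiver_act ?A' (\<phi> \<circ> hh) (\<phi> \<circ> tt) h y) a = quiver_act A hh tt (h \<circ> \<phi>) (\<sigma> y) a"
        proof (cases "a = e")
          case True
          then show ?thesis unfolding \<sigma>_def quiver_act_def using eA minv_prop(1)[OF hu]
            by (simp add: \<phi>_def w_def[symmetric] u_def[symmetric] uw')
        next
          case False
          then show ?thesis unfolding \<sigma>_def quiver_act_def by simp
        qed
      qed
    qed
    show "\<exists>h\<in>G_W ?V'. \<pi> (quiver_act A hh tt g x) = quiver_act ?A' (\<phi> \<circ> hh) (\<phi> \<circ> tt) h (\<pi> x)"
      if g: "g \<in> G_W V" and x: "x \<in> ?X" for g x
    proof (intro bexI[of _ g])
      show "g \<in> G_W ?V'" using g unfolding G_W_def by auto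
      let ?x1 = "quiver_act A hh tt g x"
      have x1: "?x1 \<in> ?X" using g x HT Xinv by (intro qact_R_inv) auto
      have ginv: "\<And>v. v \<in> V \<Longrightarrow> invertible (g v)" using g unfolding G_W_def by auto
      have key: "k ?x1 v ** g v = g (\<phi> v) ** k x v" if v: "v \<in> V" for v
      proof (cases "v = w")
        case True
        have "k ?x1 v = matrix_inv (g w ** x e ** matrix_inv (g u))"
          unfolding k_def quiver_act_def using True eA by (simp add: w_def u_def)
        hence "k ?x1 v ** g v = g u ** matrix_inv (x e)"
          using key_id[OF Xinv[OF x eA] ginv[OF uV(2)] ginv[OF uV(1)]] True by simp
        then show ?thesis using True unfolding k_def \<phi>_def by simp
      next
        case False then show ?thesis unfolding k_def \<phi>_def by simp
      qed
      have key2: "matrix_inv (g v) ** matrix_inv (k ?x1 v) = matrix_inv (k x v) ** matrix_inv (g (\<phi> v))"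
        if v: "v \<in> V" for v
      proof (rule key_id2[OF key[OF v] kinv[OF x1] kinv[OF x] ginv[OF v]])
        show "invertible (g (\<phi> v))" using v uV unfolding \<phi>_def by (auto intro: ginv)
      qed
      show "\<pi> ?x1 = quiver_act ?A' (\<phi> \<circ> hh) (\<phi> \<circ> tt) g (\<pi> x)"
      proof
        fix a show "\<pi> ?x1 a = quiver_act ?A' (\<phi> \<circ> hh) (\<phi> \<circ> tt) g (\<pi> x) a"
        proof (cases "a \<in> ?A'")
          case True
          hence aA: "a \<in> A" and hv: "hh a \<in> V" "tt a \<in> V" using HT by auto
          have "\<pi> ?x1 a = k ?x1 (hh a) ** (g (hh a) ** x a ** matrix_inv (g (tt a))) ** matrix_inv (k ?x1 (tt a))"
            unfolding \<pi>_def quiver_act_def using True by simp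
          also have "\<dots> = (k ?x1 (hh a) ** g (hh a)) ** x a ** (matrix_inv (g (tt a)) ** matrix_inv (k ?x1 (tt a)))"
            by (rule four_assoc)
          also have "\<dots> = (g (\<phi> (hh a)) ** k x (hh a)) ** x a ** (matrix_inv (k x (tt a)) ** matrix_inv (g (\<phi> (tt a))))"
            using key[OF hv(1)] key2[OF hv(2)] by simp
          also have "\<dots> = g (\<phi> (hh a)) ** (k x (hh a) ** x a ** matrix_inv (k x (tt a))) ** matrix_inv (g (\<phi> (tt a)))"
            by (rule four_assoc[symmetric])
          also have "\<dots> = quiver_act ?A' (\<phi> \<circ> hh) (\<phi> \<circ> tt) g (\<pi> x) a"
            unfolding \<pi>_def quiver_act_def using True by simp
          finally show ?thesis .
        next
          case False then show ?thesis unfolding \<pi>_def quiver_act_def by auto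
        qed
      qed
    qed
    show "\<pi> (\<sigma> y) = y" if y: "y \<in> ?Y" for y
    proof
      fix a
      have "k (\<sigma> y) v = mat 1" for v unfolding k_def \<sigma>_def by (simp add: minv_mat1)
      then show "\<pi> (\<sigma> y) a = y a"
        unfolding \<pi>_def quiver_act_def using Yz[OF y, of a] by (simp add: minv_mat1 \<sigma>_def)
    qed
    show "\<exists>g\<in>G_W V. \<sigma> (\<pi> x) = quiver_act A hh tt g x" if x: "x \<in> ?X" for x
    proof (intro bexI[of _ "k x"] kG[OF x])
      show "\<sigma> (\<pi> x) = quiver_act A hh tt (k x) x"
      proof
        fix a show "\<sigma> (\<pi> x) a = quiver_act A hh tt (k x) x a"
        proof (cases "a = e")
          case True
          have "quiver_act A hh tt (k x) x e = matrix_inv (x e) ** x e ** matrix_inv (mat 1)"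
            unfolding quiver_act_def k_def using eA uw' by (simp add: w_def[symmetric] u_def[symmetric])
          also have "\<dots> = mat 1" using minv_prop(2)[OF Xinv[OF x eA]] by (simp add: minv_mat1)
          finally show ?thesis using True unfolding \<sigma>_def by simp
        next
          case False then show ?thesis unfolding \<sigma>_def \<pi>_def quiver_act_def by auto
        qed
      qed
    qed
  qed
qed



lemma base_case:
  fixes V :: "'v set" and A :: "'a set" and hh tt :: "'a \<Rightarrow> 'v"
  assumes fA: "finite A" and vV: "v \<in> V" and loops: "\<forall>a\<in>A. hh a = v \<and> tt a = v"
  shows "alg_iso
     (inv_ring A (R_inv A :: ('a \<Rightarrow> complex^'n::finite^'n) set) (G_W V) (quiver_act A hh tt))
     (R_inv A :: ('a \<Rightarrow> complex^'n::finite^'n) set)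
     (inv_ring {..<card A} (hom_free (card A) :: (nat \<Rightarrow> complex^'n^'n) set) GLn
        (conj_act (card A)))
     (hom_free (card A) :: (nat \<Rightarrow> complex^'n^'n) set)"
proof -
  let ?r = "card A"
  let ?X = "R_inv A :: ('a \<Rightarrow> complex^'n::finite^'n) set" and ?Y = "hom_free ?r :: (nat \<Rightarrow> complex^'n^'n) set"
  obtain b where b: "bij_betw b {0..<?r} A" using ex_bij_betw_nat_finite[OF fA] by blast
  have b': "bij_betw b {..<?r} A" using b by (simp add: atLeast0LessThan)
  define bi where "bi = inv_into {..<?r} b"
  have bi1: "\<And>a. a \<in> A \<Longrightarrow> bi a < ?r" unfolding bi_def using b' bij_betw_inv_into bij_betwE by fastforce
  have bi2: "\<And>a. a \<in> A \<Longrightarrow> b (bi a) = a" unfolding bi_def using b' by (meson bij_betw_inv_into_right)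
  have bi3: "\<And>i. i < ?r \<Longrightarrow> bi (b i) = i" unfolding bi_def using b' by (simp add: bij_betw_inv_into_left)
  have bA: "\<And>i. i < ?r \<Longrightarrow> b i \<in> A" using b' bij_betwE by fastforce
  define \<sigma> where "\<sigma> y = (\<lambda>a. if a \<in> A then y (bi a) else 0)" for y :: "nat \<Rightarrow> complex^'n^'n"
  define \<pi> where "\<pi> x = (\<lambda>i. if i < ?r then x (b i) else 0)" for x :: "'a \<Rightarrow> complex^'n^'n"
  have HT: "\<forall>a\<in>A. hh a \<in> V \<and> tt a \<in> V" using loops vV by auto
  have Xinv: "\<And>x a. x \<in> ?X \<Longrightarrow> a \<in> A \<Longrightarrow> invertible (x a)" unfolding R_inv_def by auto
  have Xz: "\<And>x a. x \<in> ?X \<Longrightarrow> a \<notin> A \<Longrightarrow> x a = 0" unfolding R_inv_def by auto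
  have Yinv: "\<And>y i. y \<in> ?Y \<Longrightarrow> i < ?r \<Longrightarrow> invertible (y i)" unfolding hom_free_def by auto
  have Yz: "\<And>y i. y \<in> ?Y \<Longrightarrow> \<not> i < ?r \<Longrightarrow> y i = 0" unfolding hom_free_def by auto
  show ?thesis
  proof (rule transfer[where \<sigma> = \<sigma> and \<pi> = \<pi>])
    show "\<sigma> y \<in> ?X" if "y \<in> ?Y" for y
      using that bi1 unfolding R_inv_def \<sigma>_def by (auto intro: Yinv)
    show "\<pi> x \<in> ?Y" if "x \<in> ?X" for x
      using that bA unfolding hom_free_def \<pi>_def by (auto intro: Xinv)
    show "quiver_act A hh tt g x \<in> ?X" if "g \<in> G_W V" "x \<in> ?X" for g x
      using that HT Xinv by (intro qact_R_inv) auto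
    show "conj_act ?r g y \<in> ?Y" if "g \<in> GLn" "y \<in> ?Y" for g y
    proof -
      have gi: "invertible g" using that(1) unfolding GLn_def by simp
      have "invertible (g ** y i ** matrix_inv g)" if "i < ?r" for i
        by (intro invertible_mult invertible_minv gi Yinv[OF \<open>y \<in> ?Y\<close> that])
      then show ?thesis unfolding hom_free_def conj_act_def by simp
    qed
    show "regon {..<?r} ?Y (\<lambda>y. f (\<sigma> y))" if "f \<in> reg_gen A" for f
    proof (rule regon_subst[OF that])
      fix a assume a: "a \<in> A"
      have "mreg {..<?r} ?Y (\<lambda>y. y (bi a))" using bi1[OF a] by (intro mreg_coord) simp
      then show "mreg {..<?r} ?Y (\<lambda>y. \<sigma> y a)" unfolding \<sigma>_def using a by simp
    qed
    show "regon A ?X (\<lambda>x. f (\<pi> x))" if "f \<in> reg_gen {..<?r}" for f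
    proof (rule regon_subst[OF that])
      fix i assume i: "i \<in> {..<?r}"
      have "mreg A ?X (\<lambda>x. x (b i))" using bA i by (intro mreg_coord) simp
      then show "mreg A ?X (\<lambda>x. \<pi> x i)" unfolding \<pi>_def using i by simp
    qed
    show "\<exists>g\<in>G_W V. \<sigma> (conj_act ?r h y) = quiver_act A hh tt g (\<sigma> y)"
      if h: "h \<in> GLn" and y: "y \<in> ?Y" for h y
    proof (intro bexI[of _ "\<lambda>_. h"])
      show "(\<lambda>_. h) \<in> G_W V" using h unfolding GLn_def G_W_def by auto
      show "\<sigma> (conj_act ?r h y) = quiver_act A hh tt (\<lambda>_. h) (\<sigma> y)"
        unfolding \<sigma>_def conj_act_def quiver_act_def using bi1 by (auto simp: fun_eq_iff)
    qed
    show "\<exists>h\<in>GLn. \<pi> (quiver_act A hh tt g x) = conj_act ?r h (\<pi> x)"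
      if g: "g \<in> G_W V" and x: "x \<in> ?X" for g x
    proof (intro bexI[of _ "g v"])
      show "g v \<in> GLn" using g vV unfolding GLn_def G_W_def by auto
      show "\<pi> (quiver_act A hh tt g x) = conj_act ?r (g v) (\<pi> x)"
        unfolding \<pi>_def conj_act_def quiver_act_def using bA loops by (auto simp: fun_eq_iff)
    qed
    show "\<pi> (\<sigma> y) = y" if y: "y \<in> ?Y" for y
      unfolding \<pi>_def \<sigma>_def using bA bi3 Yz[OF y] by (auto simp: fun_eq_iff)
    show "\<exists>g\<in>G_W V. \<sigma> (\<pi> x) = quiver_act A hh tt g x" if x: "x \<in> ?X" for x
    proof (intro bexI[of _ "\<lambda>_. mat 1"])
      show "(\<lambda>_. mat 1) \<in> G_W V" unfolding G_W_def by (simp add: invertible_mat1)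
      show "\<sigma> (\<pi> x) = quiver_act A hh tt (\<lambda>_. mat 1) x"
        unfolding \<pi>_def \<sigma>_def quiver_act_def using bi1 bi2 by (auto simp: fun_eq_iff minv_mat1)
    qed
  qed
qed

lemma rtrancl_map:
  assumes "(x, y) \<in> R\<^sup>*" "\<And>a b. (a, b) \<in> R \<Longrightarrow> (f a, f b) \<in> S\<^sup>*"
  shows "(f x, f y) \<in> S\<^sup>*"
  using assms(1)
proof (induction rule: rtrancl_induct)
  case base then show ?case by simp
next
  case (step y z) then show ?case using assms(2) by (meson rtrancl_trans)
qed

lemma rtrancl_Id_sub:
  assumes "(x, y) \<in> R\<^sup>*" "\<And>a b. (a, b) \<in> R \<Longrightarrow> a = b"
  shows "x = y"
  using assms(1)
proof (induction rule: rtrancl_induct)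
  case base then show ?case by simp
next
  case (step y z) then show ?case using assms(2) by simp
qed

theorem main:
  fixes V :: "'v set" and A :: "'a set" and hh tt :: "'a \<Rightarrow> 'v"
  assumes "finite V" and "finite A"
    and "\<forall>a\<in>A. hh a \<in> V \<and> tt a \<in> V"
    and "quiver_connected V A hh tt"
  shows "alg_iso
     (inv_ring A (R_inv A :: ('a \<Rightarrow> complex^'n::finite^'n) set) (G_W V) (quiver_act A hh tt))
     (R_inv A :: ('a \<Rightarrow> complex^'n::finite^'n) set)
     (inv_ring {..<betti1 V A} (hom_free (betti1 V A) :: (nat \<Rightarrow> complex^'n^'n) set) GLn
        (conj_act (betti1 V A)))
     (hom_free (betti1 V A) :: (nat \<Rightarrow> complex^'n^'n) set)"
  using assms
proof (induction "card V" arbitrary: V A hh tt rule: less_induct)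
  case less
  note fV = less.prems(1) and fA = less.prems(2) and HT = less.prems(3) and conn = less.prems(4)
  have Vne: "V \<noteq> {}" and reach: "V \<times> V \<subseteq> ({(hh a, tt a) | a. a \<in> A} \<union> {(hh a, tt a) | a. a \<in> A}\<inverse>)\<^sup>*"
    using conn unfolding quiver_connected_def Let_def by auto
  show ?case
  proof (cases "\<exists>e\<in>A. tt e \<noteq> hh e")
    case False
    obtain v where v: "v \<in> V" using Vne by blast
    have all: "\<forall>v'\<in>V. v' = v"
    proof
      fix v' assume "v' \<in> V"
      hence "(v', v) \<in> ({(hh a, tt a) | a. a \<in> A} \<union> {(hh a, tt a) | a. a \<in> A}\<inverse>)\<^sup>*"
        using reach v by blast
      then show "v' = v" by (rule rtrancl_Id_sub) (use False in auto)
    qed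
    hence V1: "V = {v}" using v by blast
    have loops: "\<forall>a\<in>A. hh a = v \<and> tt a = v" using HT all by blast
    have "betti1 V A = card A" unfolding betti1_def V1 by simp
    then show ?thesis using base_case[OF fA v loops] by simp
  next
    case True
    then obtain e where eA: "e \<in> A" and uw: "tt e \<noteq> hh e" by blast
    define w where "w = hh e"
    define u where "u = tt e"
    define \<phi> where "\<phi> = (\<lambda>v. if v = w then u else v)"
    have uV: "u \<in> V" "w \<in> V" using HT eA unfolding u_def w_def by auto
    have uw': "u \<noteq> w" using uw unfolding u_def w_def .
    have step: "alg_iso
     (inv_ring A (R_inv A :: ('a \<Rightarrow> complex^'n::finite^'n) set) (G_W V) (quiver_act A hh tt))
     (R_inv A :: ('a \<Rightarrow> complex^'n::finite^'n) set)
     (inv_ring (A - {e}) (R_inv (A - {e}) :: ('a \<Rightarrow> complex^'n::finite^'n) set) (G_W (V - {w}))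
        (quiver_act (A - {e}) (\<phi> \<circ> hh) (\<phi> \<circ> tt)))
     (R_inv (A - {e}) :: ('a \<Rightarrow> complex^'n::finite^'n) set)"
      unfolding \<phi>_def w_def u_def by (rule contract_step[OF eA uw HT])
    have cardlt: "card (V - {w}) < card V" using fV uV(2) by (meson card_Diff1_less)
    have HT': "\<forall>a\<in>A - {e}. (\<phi> \<circ> hh) a \<in> V - {w} \<and> (\<phi> \<circ> tt) a \<in> V - {w}"
      using HT uV uw' unfolding \<phi>_def by auto
    let ?E' = "{((\<phi> \<circ> hh) a, (\<phi> \<circ> tt) a) | a. a \<in> A - {e}}"
    have conn': "quiver_connected (V - {w}) (A - {e}) (\<phi> \<circ> hh) (\<phi> \<circ> tt)"
      unfolding quiver_connected_def Let_def
    proof (intro conjI subsetI)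
      show "V - {w} \<noteq> {}" using uV uw' by blast
      fix p assume p: "p \<in> (V - {w}) \<times> (V - {w})"
      then obtain x y where xy: "p = (x, y)" "x \<in> V - {w}" "y \<in> V - {w}" by blast
      have "(x, y) \<in> ({(hh a, tt a) | a. a \<in> A} \<union> {(hh a, tt a) | a. a \<in> A}\<inverse>)\<^sup>*"
        using reach xy by blast
      hence "(\<phi> x, \<phi> y) \<in> (?E' \<union> ?E'\<inverse>)\<^sup>*"
      proof (rule rtrancl_map)
        fix a b assume ab: "(a, b) \<in> {(hh a, tt a) | a. a \<in> A} \<union> {(hh a, tt a) | a. a \<in> A}\<inverse>"
        show "(\<phi> a, \<phi> b) \<in> (?E' \<union> ?E'\<inverse>)\<^sup>*"
        proof -
          obtain c where c: "c \<in> A" "(a, b) = (hh c, tt c) \<or> (b, a) = (hh c, tt c)" using ab by blast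
          show ?thesis
          proof (cases "c = e")
            case True
            then have "\<phi> a = \<phi> b" using c unfolding \<phi>_def w_def u_def by auto
            then show ?thesis by simp
          next
            case False
            then have "(\<phi> a, \<phi> b) \<in> ?E' \<union> ?E'\<inverse>" using c by auto
            then show ?thesis by blast
          qed
        qed
      qed
      moreover have "\<phi> x = x" "\<phi> y = y" using xy unfolding \<phi>_def by auto
      ultimately show "p \<in> (?E' \<union> ?E'\<inverse>)\<^sup>*" using xy by simp
    qed
    have IH: "alg_iso
     (inv_ring (A - {e}) (R_inv (A - {e}) :: ('a \<Rightarrow> complex^'n::finite^'n) set) (G_W (V - {w}))
        (quiver_act (A - {e}) (\<phi> \<circ> hh) (\<phi> \<circ> tt)))
     (R_inv (A - {e}) :: ('a \<Rightarrow> complex^'n::finite^'n) set)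
     (inv_ring {..<betti1 (V - {w}) (A - {e})} (hom_free (betti1 (V - {w}) (A - {e})) :: (nat \<Rightarrow> complex^'n^'n) set) GLn
        (conj_act (betti1 (V - {w}) (A - {e}))))
     (hom_free (betti1 (V - {w}) (A - {e})) :: (nat \<Rightarrow> complex^'n^'n) set)"
      using less.hyps[OF cardlt] fV fA HT' conn' by blast
    have "betti1 (V - {w}) (A - {e}) = betti1 V A"
    proof -
      have "card (A - {e}) = card A - 1" "card (V - {w}) = card V - 1"
        using eA uV fA fV by auto
      moreover have "card A \<ge> 1" using eA fA card_0_eq by fastforce
      moreover have "card V \<ge> 2"
      proof -
        have "{u, w} \<subseteq> V" using uV by auto
        hence "card {u, w} \<le> card V" using fV card_mono by blast
        thus ?thesis using uw' by simp
      qed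
      ultimately show ?thesis unfolding betti1_def by simp
    qed
    then show ?thesis using alg_iso_trans[OF step IH] by simp
  qed
qed


theorem corollary5p2:
  fixes V :: "'v set" and A :: "'a set" and hh tt :: "'a \<Rightarrow> 'v"
  assumes "finite V" and "finite A"
    and "\<forall>a\<in>A. hh a \<in> V \<and> tt a \<in> V"
    and "quiver_connected V A hh tt"
  shows "alg_iso
     (inv_ring A (R_inv A :: ('a \<Rightarrow> complex^'n::finite^'n) set) (G_W V) (quiver_act A hh tt))
     (R_inv A :: ('a \<Rightarrow> complex^'n::finite^'n) set)
     (inv_ring {..<betti1 V A} (hom_free (betti1 V A) :: (nat \<Rightarrow> complex^'n^'n) set) GLn
        (conj_act (betti1 V A)))
     (hom_free (betti1 V A) :: (nat \<Rightarrow> complex^'n^'n) set)"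
    by (rule main[OF assms])

end
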